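(* Let $0<k<n$. Suppose that $M(\pi_{k,n})$ contains a non-saturated subset. Then $M(\pi_{k,n+k})$ contains a non-saturated subset.
   Context: For integers $0<k<n$: $\varepsilon_1,\dots,\varepsilon_n$ is the standard basis of $\mathbb Q^n$, $e_i=\varepsilon_i-\frac1n(1,\dots,1)\in\mathbb Q^n$ (so $e_1+\dots+e_n=0$), and $M(\pi_{k,n})=\{e_{i_1}+\dots+e_{i_k}\mid 1\le i_1<\dots<i_k\le n\}$ (the set of $T$-weights of $\Lambda^k\Bbbk^n$ for $SL(n)$). A finite set $\{v_1,\dots,v_m\}$ is saturated if $\mathbb Z_+(v_1,\dots,v_m)=\mathbb Z(v_1,\dots,v_m)\cap\mathbb Q_+(v_1,\dots,v_m)$ (combinations with non-negative integer, integer, non-negative rational coefficients respectively); otherwise it is non-saturated. *)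

theory Defs
  imports Complex_Main
begin

text \<open>Vectors of Q^n are modelled as functions nat => rat, coordinates 0..n-1
  (zero outside). Basis indices are 0-based.\<close>

type_synonym qvec = "nat \<Rightarrow> rat"

definition eps :: "nat \<Rightarrow> nat \<Rightarrow> qvec" where
  "eps n i = (\<lambda>j. if j < n \<and> j = i then 1 else 0)"

definition evec :: "nat \<Rightarrow> nat \<Rightarrow> qvec" where
  "evec n i = (\<lambda>j. eps n i j - (if j < n then 1 / of_nat n else 0))"

definition Mpi :: "nat \<Rightarrow> nat \<Rightarrow> qvec set" where
  "Mpi k n = {(\<lambda>j. \<Sum>i\<in>S. evec n i j) | S. S \<subseteq> {0..<n} \<and> card S = k}"

definition nonneg_int_span :: "qvec set \<Rightarrow> qvec set" where
  "nonneg_int_span V = {(\<lambda>j. \<Sum>v\<in>V. of_nat (c v) * v j) | c :: qvec \<Rightarrow> nat. True}"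

definition int_span :: "qvec set \<Rightarrow> qvec set" where
  "int_span V = {(\<lambda>j. \<Sum>v\<in>V. of_int (c v) * v j) | c :: qvec \<Rightarrow> int. True}"

definition nonneg_rat_span :: "qvec set \<Rightarrow> qvec set" where
  "nonneg_rat_span V = {(\<lambda>j. \<Sum>v\<in>V. c v * v j) | c :: qvec \<Rightarrow> rat. \<forall>v\<in>V. c v \<ge> 0}"

definition saturated :: "qvec set \<Rightarrow> bool" where
  "saturated V \<longleftrightarrow> nonneg_int_span V = int_span V \<inter> nonneg_rat_span V"

end

theory Submission imports Defs begin
lemma evsum: assumes "S \<subseteq> {0..<N}"
  shows "(\<Sum>i\<in>S. evec N i j) = (if j \<in> S then 1 else 0) - (if j < N then of_nat (card S) / of_nat N else 0)"
proof -
  have fin: "finite S" using assms finite_subset by blast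
  have "(\<Sum>i\<in>S. eps N i j) = (if j \<in> S then 1 else 0)"
  proof (cases "j \<in> S")
    case True then show ?thesis using fin assms unfolding eps_def by (auto simp: sum.delta')
  next
    case False then show ?thesis unfolding eps_def by (auto intro!: sum.neutral)
  qed
  then show ?thesis unfolding evec_def by (simp add: sum_subtractf)
qed

lemma finMpi: "finite (Mpi k n)"
proof -
  have "Mpi k n \<subseteq> (\<lambda>S. (\<lambda>j. \<Sum>i\<in>S. evec n i j)) ` Pow {0..<n}"
    unfolding Mpi_def by auto
  then show ?thesis by (rule finite_subset) simp
qed

definition rr :: "nat \<Rightarrow> nat \<Rightarrow> rat" where "rr k n = of_nat k / of_nat (n+k)"
definition dd :: "nat \<Rightarrow> nat \<Rightarrow> rat" where "dd k n = of_nat k / of_nat n - rr k n"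

definition phiL :: "nat \<Rightarrow> nat \<Rightarrow> qvec \<Rightarrow> qvec" where
  "phiL k n v = (\<lambda>j. if j < n then v j + dd k n else if j < n + k then - rr k n else 0)"
definition wL :: "nat \<Rightarrow> nat \<Rightarrow> qvec" where
  "wL k n = (\<lambda>j. if j < n then - rr k n else if j < n + k then 1 - rr k n else 0)"
definition psiL :: "nat \<Rightarrow> nat \<Rightarrow> qvec \<Rightarrow> qvec" where
  "psiL k n u = (\<lambda>j. if j < n then u j - dd k n else 0)"
definition LL :: "nat \<Rightarrow> nat \<Rightarrow> qvec set \<Rightarrow> (qvec \<Rightarrow> rat) \<Rightarrow> rat \<Rightarrow> qvec" where
  "LL k n V c b = (\<lambda>j. if j < n then (\<Sum>v\<in>V. c v * v j) + dd k n * (\<Sum>v\<in>V. c v) - b * rr k n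
      else if j < n + k then - rr k n * (\<Sum>v\<in>V. c v) + b * (1 - rr k n) else 0)"

lemma psi_phi: "\<forall>j\<ge>n. v j = 0 \<Longrightarrow> psiL k n (phiL k n v) = v"
  unfolding psiL_def phiL_def by (rule ext) auto

lemma w_notin: "k > 0 \<Longrightarrow> phiL k n v \<noteq> wL k n"
proof
  assume "k > 0" "phiL k n v = wL k n"
  then have "phiL k n v n = wL k n n" by simp
  with \<open>k>0\<close> show False unfolding phiL_def wL_def by simp
qed

lemma phi_Mpi:
  assumes "v \<in> Mpi k n" "0 < k" "k < n"
  shows "phiL k n v \<in> Mpi k (n + k)"
proof -
  obtain S where S: "S \<subseteq> {0..<n}" "card S = k" "v = (\<lambda>j. \<Sum>i\<in>S. evec n i j)"
    using assms(1) unfolding Mpi_def by auto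
  have S': "S \<subseteq> {0..<n+k}" using S by auto
  have "phiL k n v = (\<lambda>j. \<Sum>i\<in>S. evec (n+k) i j)"
    unfolding S(3) phiL_def evsum[OF S(1)] evsum[OF S']
  proof (rule ext)
    fix j show "(if j < n then (if j \<in> S then 1 else 0) - (if j < n then of_nat (card S) / of_nat n else 0) + dd k n
       else if j < n + k then - rr k n else 0) = (if j \<in> S then 1 else 0) - (if j < n + k then of_nat (card S) / of_nat (n + k) else 0)"
      using S(1,2) by (auto simp: dd_def rr_def)
  qed
  then show ?thesis unfolding Mpi_def using S' S(2) by blast
qed

lemma w_Mpi:
  shows "wL k n \<in> Mpi k (n + k)"
proof -
  let ?S = "{n..<n+k}"
  have S': "?S \<subseteq> {0..<n+k}" by auto
  have "wL k n = (\<lambda>j. \<Sum>i\<in>?S. evec (n+k) i j)"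
    unfolding wL_def evsum[OF S'] by (auto simp: rr_def)
  then show ?thesis unfolding Mpi_def using S' by fastforce
qed

lemma sum_lift:
  assumes fin: "finite V" and van: "\<forall>v\<in>V. \<forall>j\<ge>n. v j = 0" and k: "k > 0"
  shows "(\<lambda>j. \<Sum>u\<in>insert (wL k n) (phiL k n ` V). a u * u j) = LL k n V (\<lambda>v. a (phiL k n v)) (a (wL k n))"
proof (rule ext)
  fix j
  have inj: "inj_on (phiL k n) V"
    by (rule inj_on_inverseI[where g="psiL k n"]) (use van psi_phi in auto)
  have nin: "wL k n \<notin> phiL k n ` V" using w_notin[OF k] by (metis imageE)
  have "(\<Sum>u\<in>insert (wL k n) (phiL k n ` V). a u * u j) =
     a (wL k n) * wL k n j + (\<Sum>v\<in>V. a (phiL k n v) * phiL k n v j)"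
    using fin nin inj by (simp add: sum.reindex)
  also have "\<dots> = LL k n V (\<lambda>v. a (phiL k n v)) (a (wL k n)) j"
    unfolding LL_def phiL_def wL_def
    using van by (auto simp: algebra_simps sum.distrib sum_distrib_left sum_distrib_right intro!: sum.cong)
  finally show "(\<Sum>u\<in>insert (wL k n) (phiL k n ` V). a u * u j) = LL k n V (\<lambda>v. a (phiL k n v)) (a (wL k n)) j" .
qed
lemma eA: fixes K N s b :: rat assumes "N > 0" "K \<ge> 0"
  shows "- (K/(N+K)) * s + b * (1 - K/(N+K)) = (b * N - s * K) / (N+K)"
proof -
  have nz: "N + K \<noteq> 0" using assms by auto
  define t where "t = K/(N+K)"
  have t: "t * (N+K) = K" unfolding t_def using nz by simp
  have "(- t * s + b * (1 - t)) * (N+K) = b * (N + K) - (s + b) * (t * (N+K))" by (simp add: algebra_simps)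
  also have "\<dots> = b * N - s * K" using t by (simp add: algebra_simps)
  finally show ?thesis unfolding t_def[symmetric] using nz by (simp add: eq_divide_eq)
qed
lemma eB: fixes K N s1 s2 b1 b2 :: rat assumes "N > 0" "K \<ge> 0" "b1 * N - s1 * K = b2 * N - s2 * K"
  shows "(K/N - K/(N+K)) * s1 - b1 * (K/(N+K)) = (K/N - K/(N+K)) * s2 - b2 * (K/(N+K))"
proof -
  have nz: "N + K \<noteq> 0" "N \<noteq> 0" using assms by auto
  have d: "K/N - K/(N+K) = (K/N) * (K/(N+K))" using nz by (simp add: field_simps)
  have b: "b1 - b2 = (s1 - s2) * (K/N)" using assms(3) nz by (simp add: field_simps)
  define x where "x = K/N"
  define y where "y = K/(N+K)"
  have b': "b1 = b2 + (s1 - s2) * x" using b unfolding x_def by simp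
  have d': "x - y = x * y" using d unfolding x_def y_def .
  show ?thesis unfolding x_def[symmetric] y_def[symmetric] d' b' by (simp add: algebra_simps)
qed

lemma rr_eq: "rr k n = of_nat k / (of_nat n + of_nat k)" unfolding rr_def by simp
lemma dd_eq: "dd k n = of_nat k / of_nat n - of_nat k / (of_nat n + of_nat k)" unfolding dd_def rr_eq ..

lemma arithA: assumes "0 < n"
  shows "(- rr k n * s1 + b1 * (1 - rr k n) = - rr k n * s2 + b2 * (1 - rr k n)) \<longleftrightarrow>
    (b1 * of_nat n - s1 * of_nat k = b2 * of_nat n - s2 * of_nat k)"
proof -
  have p: "(of_nat n + of_nat k :: rat) \<noteq> 0" using assms by simp
  have e1: "- rr k n * s1 + b1 * (1 - rr k n) = (b1 * of_nat n - s1 * of_nat k) / (of_nat n + of_nat k)"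
    unfolding rr_eq by (rule eA) (use assms in auto)
  have e2: "- rr k n * s2 + b2 * (1 - rr k n) = (b2 * of_nat n - s2 * of_nat k) / (of_nat n + of_nat k)"
    unfolding rr_eq by (rule eA) (use assms in auto)
  show ?thesis unfolding e1 e2 using p by (simp add: divide_cancel_right)
qed

lemma arithB: assumes "0 < n" "b1 * of_nat n - s1 * of_nat k = b2 * of_nat n - s2 * of_nat k"
  shows "dd k n * s1 - b1 * rr k n = dd k n * s2 - b2 * rr k n"
  unfolding dd_eq rr_eq by (rule eB) (use assms in auto)

lemma LL_eq:
  assumes "0 < n" "\<forall>j<n. (\<Sum>v\<in>V. c1 v * v j) = (\<Sum>v\<in>V. c2 v * v j)"
    "b1 * of_nat n - (\<Sum>v\<in>V. c1 v) * of_nat k = b2 * of_nat n - (\<Sum>v\<in>V. c2 v) * of_nat k"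
  shows "LL k n V c1 b1 = LL k n V c2 b2"
proof (rule ext)
  fix j
  have A: "- rr k n * (\<Sum>v\<in>V. c1 v) + b1 * (1 - rr k n) = - rr k n * (\<Sum>v\<in>V. c2 v) + b2 * (1 - rr k n)"
    using arithA[OF assms(1)] assms(3) by blast
  have B: "dd k n * (\<Sum>v\<in>V. c1 v) - b1 * rr k n = dd k n * (\<Sum>v\<in>V. c2 v) - b2 * rr k n"
    using arithB[OF assms(1,3)] .
  show "LL k n V c1 b1 j = LL k n V c2 b2 j"
    unfolding LL_def using A B assms(2) by (auto simp: algebra_simps)
qed

lemma LL_inj:
  assumes "0 < n" "0 < k" "LL k n V c1 b1 = LL k n V c2 b2" "j < n"
  shows "(\<Sum>v\<in>V. c1 v * v j) = (\<Sum>v\<in>V. c2 v * v j)"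
proof -
  have "LL k n V c1 b1 n = LL k n V c2 b2 n" using assms(3) by simp
  then have A: "- rr k n * (\<Sum>v\<in>V. c1 v) + b1 * (1 - rr k n) = - rr k n * (\<Sum>v\<in>V. c2 v) + b2 * (1 - rr k n)"
    unfolding LL_def using assms(2) by simp
  have B: "dd k n * (\<Sum>v\<in>V. c1 v) - b1 * rr k n = dd k n * (\<Sum>v\<in>V. c2 v) - b2 * rr k n"
    using arithB[OF assms(1)] A arithA[OF assms(1)] by blast
  have "LL k n V c1 b1 j = LL k n V c2 b2 j" using assms(3) by simp
  then show ?thesis unfolding LL_def using assms(4) B by (simp add: algebra_simps)
qed
lemma LL_cong: "(\<And>v. v \<in> V \<Longrightarrow> c1 v = c2 v) \<Longrightarrow> b1 = b2 \<Longrightarrow> LL k n V c1 b1 = LL k n V c2 b2"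
proof -
  assume h: "\<And>v. v \<in> V \<Longrightarrow> c1 v = c2 v" "b1 = b2"
  have s: "sum c1 V = sum c2 V" by (rule sum.cong) (use h in auto)
  have t: "(\<Sum>v\<in>V. c1 v * v j) = (\<Sum>v\<in>V. c2 v * v j)" for j by (rule sum.cong) (use h in auto)
  show ?thesis unfolding LL_def s t h(2) ..
qed

lemma Mpi_van: "v \<in> Mpi k n \<Longrightarrow> j \<ge> n \<Longrightarrow> v j = 0"
proof -
  assume "v \<in> Mpi k n" "j \<ge> n"
  then obtain S where S: "S \<subseteq> {0..<n}" "v = (\<lambda>j. \<Sum>i\<in>S. evec n i j)"
    unfolding Mpi_def by auto
  then show "v j = 0" using \<open>j \<ge> n\<close> evsum[OF S(1)] by auto
qed

lemma sub_span: "nonneg_int_span V \<subseteq> int_span V \<inter> nonneg_rat_span V"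
proof
  fix x assume "x \<in> nonneg_int_span V"
  then obtain c where c: "x = (\<lambda>j. \<Sum>v\<in>V. of_nat (c v) * v j)" unfolding nonneg_int_span_def by auto
  have "x \<in> int_span V" unfolding int_span_def c
    by (rule CollectI, rule exI[where x="\<lambda>v. int (c v)"]) simp
  moreover have "x \<in> nonneg_rat_span V" unfolding nonneg_rat_span_def c
    by (rule CollectI, rule exI[where x="\<lambda>v. of_nat (c v)"]) simp
  ultimately show "x \<in> int_span V \<inter> nonneg_rat_span V" by simp
qed

theorem lemma5:
  fixes k n :: nat
  assumes "0 < k" and "k < n"
    and "\<exists>V. V \<subseteq> Mpi k n \<and> \<not> saturated V"
  shows "\<exists>V. V \<subseteq> Mpi k (n + k) \<and> \<not> saturated V"
proof -
  obtain V where V: "V \<subseteq> Mpi k n" "\<not> saturated V" using assms(3) by blast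
  have n0: "0 < n" using assms by simp
  have fin: "finite V" using V(1) finMpi finite_subset by blast
  have van: "\<forall>v\<in>V. \<forall>j\<ge>n. v j = 0" using V(1) Mpi_van by blast
  obtain y where y1: "y \<in> int_span V" and y2: "y \<in> nonneg_rat_span V" and y3: "y \<notin> nonneg_int_span V"
    using V(2) sub_span[of V] unfolding saturated_def by blast
  obtain zc where zc: "y = (\<lambda>j. \<Sum>v\<in>V. of_int (zc v) * v j)" using y1 unfolding int_span_def by auto
  obtain qc where qc: "y = (\<lambda>j. \<Sum>v\<in>V. qc v * v j)" "\<forall>v\<in>V. qc v \<ge> 0"
    using y2 unfolding nonneg_rat_span_def by auto
  define Z where "Z = (\<Sum>v\<in>V. zc v)"
  define Q where "Q = (\<Sum>v\<in>V. qc v)"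
  define m where "m = nat \<bar>Z\<bar>"
  define r :: rat where "r = of_nat m + (of_nat k / of_nat n) * (Q - of_int Z)"
  have Q0: "Q \<ge> 0" unfolding Q_def using qc(2) by (simp add: sum_nonneg)
  have mZ: "(of_nat m :: rat) = of_int \<bar>Z\<bar>" unfolding m_def by simp
  have kn: "0 \<le> (of_nat k / of_nat n :: rat)" "(of_nat k / of_nat n :: rat) \<le> 1" using assms by auto
  have "(of_nat k / of_nat n) * of_int Z \<le> (of_nat k / of_nat n) * (of_int \<bar>Z\<bar> :: rat)"
    using kn(1) by (intro mult_left_mono) auto
  also have "\<dots> \<le> of_int \<bar>Z\<bar>" using kn(2) by (intro mult_left_le_one_le) auto
  finally have "(of_nat k / of_nat n) * of_int Z \<le> (of_int \<bar>Z\<bar> :: rat)" .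
  then have r0: "r \<ge> 0" unfolding r_def mZ right_diff_distrib
    using mult_nonneg_nonneg[OF kn(1) Q0] by linarith
  define w where "w = wL k n"
  define V' where "V' = insert w (phiL k n ` V)"
  have V'sub: "V' \<subseteq> Mpi k (n + k)" unfolding V'_def w_def
    using w_Mpi phi_Mpi assms(1,2) V(1) by blast
  define zc' where "zc' u = (if u = w then int m else zc (psiL k n u))" for u
  define qc' where "qc' u = (if u = w then r else qc (psiL k n u))" for u
  have pw: "v \<in> V \<Longrightarrow> phiL k n v \<noteq> w" for v unfolding w_def using w_notin[OF assms(1)] by blast
  have pp: "v \<in> V \<Longrightarrow> psiL k n (phiL k n v) = v" for v using psi_phi van by blast
  define x where "x = (\<lambda>j. \<Sum>u\<in>V'. of_int (zc' u) * u j)"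
  have xint: "x \<in> int_span V'" unfolding x_def int_span_def by blast
  have x1: "x = LL k n V (\<lambda>v. of_int (zc v)) (of_nat m)"
    unfolding x_def V'_def w_def sum_lift[OF fin van assms(1), of "\<lambda>u. of_int (zc' u)"]
    by (rule LL_cong) (use pw pp in \<open>auto simp: zc'_def w_def\<close>)
  have x2: "(\<lambda>j. \<Sum>u\<in>V'. qc' u * u j) = LL k n V qc r"
    unfolding V'_def w_def sum_lift[OF fin van assms(1), of "qc'"]
    by (rule LL_cong) (use pw pp in \<open>auto simp: qc'_def w_def\<close>)
  have "LL k n V (\<lambda>v. of_int (zc v)) (of_nat m) = LL k n V qc r"
  proof (rule LL_eq[OF n0])
    show "\<forall>j<n. (\<Sum>v\<in>V. of_int (zc v) * v j) = (\<Sum>v\<in>V. qc v * v j)"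
    proof (intro allI impI)
      fix j show "(\<Sum>v\<in>V. of_int (zc v) * v j) = (\<Sum>v\<in>V. qc v * v j)"
        using fun_cong[OF zc, of j] fun_cong[OF qc(1), of j] by simp
    qed
    have "(\<Sum>v\<in>V. of_int (zc v) :: rat) = of_int Z" unfolding Z_def by simp
    moreover have "r * of_nat n = of_nat m * of_nat n + of_nat k * (Q - of_int Z)"
      unfolding r_def using n0 by (simp add: field_simps)
    ultimately show "of_nat m * of_nat n - (\<Sum>v\<in>V. of_int (zc v)) * of_nat k = r * of_nat n - (\<Sum>v\<in>V. qc v) * of_nat k"
      unfolding Q_def[symmetric] by (simp add: algebra_simps)
  qed
  then have xrat: "x \<in> nonneg_rat_span V'"
    unfolding nonneg_rat_span_def x1 x2[symmetric]
    using r0 qc(2) pw pp by (auto simp: qc'_def V'_def)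
  have xnot: "x \<notin> nonneg_int_span V'"
  proof
    assume "x \<in> nonneg_int_span V'"
    then obtain pc where pc: "x = (\<lambda>j. \<Sum>u\<in>V'. of_nat (pc u) * u j)" unfolding nonneg_int_span_def by auto
    have "x = LL k n V (\<lambda>v. of_nat (pc (phiL k n v))) (of_nat (pc w))"
      unfolding pc V'_def w_def sum_lift[OF fin van assms(1), of "\<lambda>u. of_nat (pc u)"] by simp
    then have LLeq: "LL k n V (\<lambda>v. of_int (zc v)) (of_nat m) = LL k n V (\<lambda>v. of_nat (pc (phiL k n v))) (of_nat (pc w))"
      using x1 by simp
    have eq: "j < n \<Longrightarrow> (\<Sum>v\<in>V. of_int (zc v) * v j) = (\<Sum>v\<in>V. of_nat (pc (phiL k n v)) * v j)" for j
      using LL_inj[OF n0 assms(1) LLeq] by simp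
    have "y = (\<lambda>j. \<Sum>v\<in>V. of_nat (pc (phiL k n v)) * v j)"
    proof
      fix j show "y j = (\<Sum>v\<in>V. of_nat (pc (phiL k n v)) * v j)"
      proof (cases "j < n")
        case True then show ?thesis using eq zc by simp
      next
        case False
        then have "\<forall>v\<in>V. v j = 0" using van by simp
        then show ?thesis using zc by (simp add: sum.neutral)
      qed
    qed
    then have "y \<in> nonneg_int_span V" unfolding nonneg_int_span_def
      by (intro CollectI exI[where x="\<lambda>v. pc (phiL k n v)"]) simp
    with y3 show False by simp
  qed
  have "\<not> saturated V'" unfolding saturated_def using xint xrat xnot by blast
  with V'sub show ?thesis by blast
qed
end
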